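(* Let $v=(x,y,z)^T\in\mathbb{O}^3$ with associator $[v]:=[x,y,z]\neq 0$. If there exists a $3\times3$ Hermitian octonionic matrix $A$ with $Av=v[v]$, then $\operatorname{Re}(x)=\operatorname{Re}(y)=\operatorname{Re}(z)=0$, i.e. $\operatorname{Re}(v)=0$.
   Context: $\mathbb{O}$ denotes the real octonions (8-dimensional normed division algebra, nonassociative). For $w\in\mathbb{O}$, $\operatorname{Re}(w)$ is its real part. The associator is $[x,y,z]=(xy)z-x(yz)$. A $3\times3$ Hermitian octonionic matrix has the form $A=\begin{pmatrix} p & a & \bar c\\ \bar a & m & b\\ c & \bar b & n\end{pmatrix}$ with $p,m,n\in\mathbb{R}$, $a,b,c\in\mathbb{O}$. $Av$ has components $\sum_j A_{ij}v_j$ (octonionic products) and $v[v]=(x[v],y[v],z[v])^T$; thus $Av=v[v]$ means $px+ay+\bar c z = x[v]$, $\bar a x+my+bz=y[v]$, $cx+\bar b y+nz=z[v]$. *)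

theory Defs
  imports Main "HOL.Real"
begin

datatype quat = Quat (q0: real) (q1: real) (q2: real) (q3: real)

instantiation quat :: "{zero, plus, minus, uminus, times}"
begin
definition "0 = Quat 0 0 0 0"
definition "p + q = Quat (q0 p + q0 q) (q1 p + q1 q) (q2 p + q2 q) (q3 p + q3 q)"
definition "p - q = Quat (q0 p - q0 q) (q1 p - q1 q) (q2 p - q2 q) (q3 p - q3 q)"
definition "- p = Quat (- q0 p) (- q1 p) (- q2 p) (- q3 p)"
definition "p * q = Quat
   (q0 p * q0 q - q1 p * q1 q - q2 p * q2 q - q3 p * q3 q)
   (q0 p * q1 q + q1 p * q0 q + q2 p * q3 q - q3 p * q2 q)
   (q0 p * q2 q - q1 p * q3 q + q2 p * q0 q + q3 p * q1 q)
   (q0 p * q3 q + q1 p * q2 q - q2 p * q1 q + q3 p * q0 q)"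
instance ..
end

definition qcnj :: "quat \<Rightarrow> quat" where
  "qcnj p = Quat (q0 p) (- q1 p) (- q2 p) (- q3 p)"

section \<open>Octonions via the Cayley--Dickson construction\<close>

datatype oct = Oct (ofst: quat) (osnd: quat)

instantiation oct :: "{zero, plus, minus, uminus, times}"
begin
definition "0 = Oct 0 0"
definition "x + y = Oct (ofst x + ofst y) (osnd x + osnd y)"
definition "x - y = Oct (ofst x - ofst y) (osnd x - osnd y)"
definition "- x = Oct (- ofst x) (- osnd x)"
definition "x * y = Oct (ofst x * ofst y - qcnj (osnd y) * osnd x)
                        (osnd y * ofst x + osnd x * qcnj (ofst y))"
instance ..
end

definition ocnj :: "oct \<Rightarrow> oct" where
  "ocnj x = Oct (qcnj (ofst x)) (- osnd x)"

definition oRe :: "oct \<Rightarrow> real" where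
  "oRe x = q0 (ofst x)"

definition oreal :: "real \<Rightarrow> oct" where
  "oreal r = Oct (Quat r 0 0 0) 0"

definition associator :: "oct \<Rightarrow> oct \<Rightarrow> oct \<Rightarrow> oct" where
  "associator x y z = (x * y) * z - x * (y * z)"

end

theory Submission
  imports Defs
begin

lemma oct_eqI: "q0 (ofst x) = q0 (ofst y) \<Longrightarrow> q1 (ofst x) = q1 (ofst y) \<Longrightarrow> q2 (ofst x) = q2 (ofst y) \<Longrightarrow> q3 (ofst x) = q3 (ofst y) \<Longrightarrow>
  q0 (osnd x) = q0 (osnd y) \<Longrightarrow> q1 (osnd x) = q1 (osnd y) \<Longrightarrow> q2 (osnd x) = q2 (osnd y) \<Longrightarrow> q3 (osnd x) = q3 (osnd y) \<Longrightarrow> x = y"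
  by (cases x; cases y; rename_tac a b c d; case_tac a; case_tac b; case_tac c; case_tac d; simp)

lemmas odefs = times_oct_def plus_oct_def minus_oct_def uminus_oct_def zero_oct_def
  times_quat_def plus_quat_def minus_quat_def uminus_quat_def zero_quat_def qcnj_def ocnj_def oRe_def oreal_def associator_def

definition nsq :: "oct \<Rightarrow> real" where "nsq x = oRe (x * ocnj x)"

lemma nsq_pos: "x \<noteq> 0 \<Longrightarrow> nsq x > 0"
proof -
  assume "x \<noteq> 0"
  have e: "nsq x = (q0 (ofst x))\<^sup>2 + (q1 (ofst x))\<^sup>2 + (q2 (ofst x))\<^sup>2 + (q3 (ofst x))\<^sup>2
     + (q0 (osnd x))\<^sup>2 + (q1 (osnd x))\<^sup>2 + (q2 (osnd x))\<^sup>2 + (q3 (osnd x))\<^sup>2"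
    by (simp add: nsq_def odefs power2_eq_square)
  have "\<not> (q0 (ofst x) = 0 \<and> q1 (ofst x) = 0 \<and> q2 (ofst x) = 0 \<and> q3 (ofst x) = 0 \<and>
     q0 (osnd x) = 0 \<and> q1 (osnd x) = 0 \<and> q2 (osnd x) = 0 \<and> q3 (osnd x) = 0)"
    using \<open>x \<noteq> 0\<close> by (auto intro!: oct_eqI simp: zero_oct_def zero_quat_def)
  then show ?thesis unfolding e
    by (smt (verit) not_sum_power2_lt_zero sum_power2_eq_zero_iff zero_le_power2)
qed

lemma pairing:
  "oRe (ocnj u1 * (oreal p * x + a * y + ocnj c * z) + ocnj u2 * (ocnj a * x + oreal m * y + b * z)
      + ocnj u3 * (c * x + ocnj b * y + oreal n * z))
   = p * oRe (ocnj u1 * x) + m * oRe (ocnj u2 * y) + n * oRe (ocnj u3 * z)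
     + oRe (a * (y * ocnj u1 + u2 * ocnj x)) + oRe (b * (z * ocnj u2 + u3 * ocnj y))
     + oRe (c * (x * ocnj u3 + u1 * ocnj z))"
  by (simp add: odefs; algebra)

context
  fixes x y z :: oct
begin
definition "qq = ocnj y * x - oreal (oRe (ocnj y * x))"

lemma K1: "oRe (ocnj (x * qq) * x) = 0" by (simp add: qq_def odefs; algebra)
lemma K2: "oRe (ocnj (y * qq) * y) = 0" by (simp add: qq_def odefs; algebra)
lemma K3: "oRe (ocnj (z * qq + associator x y z) * z) = 0" by (simp add: qq_def odefs; algebra)
lemma K12: "y * ocnj (x * qq) + (y * qq) * ocnj x = 0" by (rule oct_eqI; simp add: qq_def odefs; algebra)
lemma K23: "z * ocnj (y * qq) + (z * qq + associator x y z) * ocnj y = 0" by (rule oct_eqI; simp add: qq_def odefs; algebra)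
lemma K31: "x * ocnj (z * qq + associator x y z) + (x * qq) * ocnj z = 0" by (rule oct_eqI; simp add: qq_def odefs; algebra)
lemma Qw: "oRe (ocnj qq * associator x y z) = 0" by (simp add: qq_def odefs; algebra)

end

lemma P1: "oRe (ocnj (x * a) * (x * b)) = nsq x * oRe (ocnj a * b)" by (simp add: nsq_def odefs; algebra)
lemma P2: "oRe (ocnj w * (z * w)) = oRe z * nsq w" by (simp add: nsq_def odefs; algebra)
lemma P3: "oRe (s + t) = oRe s + oRe t" by (simp add: odefs)
lemma P4: "ocnj (s + t) = ocnj s + ocnj t" by (rule oct_eqI; simp add: odefs)
lemma P5: "(s + t) * (r::oct) = s * r + t * r" by (rule oct_eqI; simp add: odefs; algebra)


lemma rot3: "A + B + C = C + A + (B::oct)" by (rule oct_eqI; simp add: odefs)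
lemma rot3b: "A + B + C = B + C + (A::oct)" by (rule oct_eqI; simp add: odefs)
lemma mul0: "oRe (a * (0::oct)) = 0" by (simp add: odefs)

lemma assoc_cyc: "associator y z x = associator x y z" by (rule oct_eqI; simp add: odefs; algebra)

lemma key:
  assumes h1: "oreal p * x + a * y + ocnj c * z = x * associator x y z"
    and h2: "ocnj a * x + oreal m * y + b * z = y * associator x y z"
    and h3: "c * x + ocnj b * y + oreal n * z = z * associator x y z"
    and nz: "associator x y z \<noteq> 0"
  shows "oRe z = 0"
proof -
  define w where "w = associator x y z"
  define q where "q = qq x y"
  have "oRe (ocnj (x*q) * (oreal p * x + a * y + ocnj c * z) + ocnj (y*q) * (ocnj a * x + oreal m * y + b * z)
      + ocnj (z*q + w) * (c * x + ocnj b * y + oreal n * z)) = 0"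
    unfolding pairing q_def w_def using K1[of x y] K2[of y x] K3[of z x y] K12[of y x] K23[of z y x] K31[of x z y]
    by (simp add: mul0)
  then have "oRe (ocnj (x*q) * (x * w) + ocnj (y*q) * (y * w) + ocnj (z*q + w) * (z * w)) = 0"
    using h1 h2 h3 by (simp add: w_def)
  then have "oRe z * nsq w = 0"
    by (simp add: P3 P4 P5 P1 P2 q_def w_def Qw)
  moreover have "nsq w > 0" using nz nsq_pos w_def by simp
  ultimately show ?thesis by simp
qed

theorem theorem1:
  fixes x y z :: oct
  assumes "associator x y z \<noteq> 0"
    and "\<exists>(p::real) (m::real) (n::real) (a::oct) (b::oct) (c::oct).
           oreal p * x + a * y + ocnj c * z = x * associator x y z \<and>
           ocnj a * x + oreal m * y + b * z = y * associator x y z \<and>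
           c * x + ocnj b * y + oreal n * z = z * associator x y z"
  shows "oRe x = 0 \<and> oRe y = 0 \<and> oRe z = 0"
proof -
  obtain p m n a b c where h1: "oreal p * x + a * y + ocnj c * z = x * associator x y z"
    and h2: "ocnj a * x + oreal m * y + b * z = y * associator x y z"
    and h3: "c * x + ocnj b * y + oreal n * z = z * associator x y z"
    using assms(2) by blast
  have c1: "associator y z x = associator x y z" by (rule assoc_cyc)
  have c2: "associator z x y = associator x y z" using assoc_cyc[of z x y] assoc_cyc[of y z x] by simp
  have z0: "oRe z = 0" by (rule key[OF h1 h2 h3 assms(1)])
  have x0: "oRe x = 0"
  proof (rule key)
    show "oreal m * y + b * z + ocnj a * x = y * associator y z x"
      using h2 c1 rot3b[of "ocnj a * x" "oreal m * y" "b * z"] by simp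
    show "ocnj b * y + oreal n * z + c * x = z * associator y z x"
      using h3 c1 rot3b[of "c * x" "ocnj b * y" "oreal n * z"] by simp
    show "a * y + ocnj c * z + oreal p * x = x * associator y z x"
      using h1 c1 rot3b[of "oreal p * x" "a * y" "ocnj c * z"] by simp
    show "associator y z x \<noteq> 0" using c1 assms(1) by simp
  qed
  have y0: "oRe y = 0"
  proof (rule key)
    show "oreal n * z + c * x + ocnj b * y = z * associator z x y"
      using h3 c2 rot3[of "c * x" "ocnj b * y" "oreal n * z"] by simp
    show "ocnj c * z + oreal p * x + a * y = x * associator z x y"
      using h1 c2 rot3[of "oreal p * x" "a * y" "ocnj c * z"] by simp
    show "b * z + ocnj a * x + oreal m * y = y * associator z x y"
      using h2 c2 rot3[of "ocnj a * x" "oreal m * y" "b * z"] by simp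
    show "associator z x y \<noteq> 0" using c2 assms(1) by simp
  qed
  show ?thesis using x0 y0 z0 by simp
qed

end
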